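(* Let $\mathbb{F}$ be an infinite field with $\operatorname{char}(\mathbb{F})\neq 2$, let $G$ be a group with a group involution $\ast$, extended $\mathbb{F}$-linearly to $\mathbb{F}G$. Suppose that $\mathbb{F}G$ is normal with respect to $\ast$. Then for all $g,h\in G$, either $gh=hg$ or $gh=g^\ast h^\ast$.
   Context: A group involution on $G$ is a map $\ast:G\to G$ with $(gh)^\ast=h^\ast g^\ast$ and $(g^\ast)^\ast=g$ for all $g,h\in G$; it is extended $\mathbb{F}$-linearly to an algebra involution of the group algebra $\mathbb{F}G$, $(\sum \alpha_g g)^\ast=\sum\alpha_g g^\ast$. The algebra $\mathbb{F}G$ is called normal (with respect to $\ast$) if $\alpha\alpha^\ast=\alpha^\ast\alpha$ for all $\alpha\in\mathbb{F}G$. *)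

theory Defs
  imports "HOL-Algebra.Group"
begin

definition group_involution :: "('g, 'b) monoid_scheme \<Rightarrow> ('g \<Rightarrow> 'g) \<Rightarrow> bool" where
  "group_involution G s \<longleftrightarrow>
     (\<forall>x\<in>carrier G. s x \<in> carrier G) \<and>
     (\<forall>x\<in>carrier G. \<forall>y\<in>carrier G. s (x \<otimes>\<^bsub>G\<^esub> y) = s y \<otimes>\<^bsub>G\<^esub> s x) \<and>
     (\<forall>x\<in>carrier G. s (s x) = x)"

definition group_algebra :: "('g, 'b) monoid_scheme \<Rightarrow> ('g \<Rightarrow> 'a::field) set" where
  "group_algebra G = {\<alpha>. finite {g\<in>carrier G. \<alpha> g \<noteq> 0} \<and> (\<forall>x. x \<notin> carrier G \<longrightarrow> \<alpha> x = 0)}"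

definition ga_mult :: "('g, 'b) monoid_scheme \<Rightarrow> ('g \<Rightarrow> 'a::field) \<Rightarrow> ('g \<Rightarrow> 'a) \<Rightarrow> ('g \<Rightarrow> 'a)" where
  "ga_mult G \<alpha> \<beta> = (\<lambda>x. if x \<in> carrier G
      then (\<Sum>g\<in>{g\<in>carrier G. \<alpha> g \<noteq> 0}. \<alpha> g * \<beta> (inv\<^bsub>G\<^esub> g \<otimes>\<^bsub>G\<^esub> x))
      else 0)"

text \<open>Linear extension of the involution: (\<Sum> \<alpha>_g g)* = \<Sum> \<alpha>_g g*, i.e. the coefficient at x is \<alpha>(x*).\<close>
definition ga_star :: "('g, 'b) monoid_scheme \<Rightarrow> ('g \<Rightarrow> 'g) \<Rightarrow> ('g \<Rightarrow> 'a::field) \<Rightarrow> ('g \<Rightarrow> 'a)" where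
  "ga_star G s \<alpha> = (\<lambda>x. if x \<in> carrier G then \<alpha> (s x) else 0)"

definition ga_normal :: "('g, 'b) monoid_scheme \<Rightarrow> ('g \<Rightarrow> 'g) \<Rightarrow> 'a::field itself \<Rightarrow> bool" where
  "ga_normal G s _ \<longleftrightarrow> (\<forall>\<alpha>::'g \<Rightarrow> 'a \<in> group_algebra G.
      ga_mult G \<alpha> (ga_star G s \<alpha>) = ga_mult G (ga_star G s \<alpha>) \<alpha>)"

end

theory Submission
  imports Defs "HOL-Library.Function_Algebras"
begin

lemma ga_mult_S:
  assumes "finite S" "{g\<in>carrier G. \<alpha> g \<noteq> 0} \<subseteq> S" "S \<subseteq> carrier G"
  shows "ga_mult G \<alpha> \<beta> x = (if x \<in> carrier G then (\<Sum>g\<in>S. \<alpha> g * \<beta> (inv\<^bsub>G\<^esub> g \<otimes>\<^bsub>G\<^esub> x)) else 0)"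
  unfolding ga_mult_def using assms
  by (auto intro!: sum.mono_neutral_left)

lemma ga_mult_add_left:
  fixes \<alpha>1 \<alpha>2 :: "'g \<Rightarrow> 'a::field"
  assumes "\<alpha>1 \<in> group_algebra G" "\<alpha>2 \<in> group_algebra G"
  shows "ga_mult G (\<alpha>1 + \<alpha>2) \<beta> = ga_mult G \<alpha>1 \<beta> + ga_mult G \<alpha>2 \<beta>"
proof
  fix x
  let ?S = "{g\<in>carrier G. \<alpha>1 g \<noteq> 0} \<union> {g\<in>carrier G. \<alpha>2 g \<noteq> 0}"
  have f: "finite ?S" using assms by (auto simp: group_algebra_def)
  have "ga_mult G (\<alpha>1 + \<alpha>2) \<beta> x = (if x \<in> carrier G then (\<Sum>g\<in>?S. (\<alpha>1+\<alpha>2) g * \<beta> (inv\<^bsub>G\<^esub> g \<otimes>\<^bsub>G\<^esub> x)) else 0)"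
    by (rule ga_mult_S[OF f]) auto
  moreover have "ga_mult G \<alpha>1 \<beta> x = (if x \<in> carrier G then (\<Sum>g\<in>?S. \<alpha>1 g * \<beta> (inv\<^bsub>G\<^esub> g \<otimes>\<^bsub>G\<^esub> x)) else 0)"
    by (rule ga_mult_S[OF f]) auto
  moreover have "ga_mult G \<alpha>2 \<beta> x = (if x \<in> carrier G then (\<Sum>g\<in>?S. \<alpha>2 g * \<beta> (inv\<^bsub>G\<^esub> g \<otimes>\<^bsub>G\<^esub> x)) else 0)"
    by (rule ga_mult_S[OF f]) auto
  ultimately show "ga_mult G (\<alpha>1 + \<alpha>2) \<beta> x = (ga_mult G \<alpha>1 \<beta> + ga_mult G \<alpha>2 \<beta>) x"
    by (simp add: distrib_right sum.distrib)
qed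

lemma ga_mult_add_right:
  "ga_mult G \<alpha> (\<beta>1 + \<beta>2) = ga_mult G \<alpha> \<beta>1 + ga_mult G \<alpha> \<beta>2"
  unfolding ga_mult_def by (auto simp: distrib_left sum.distrib)

lemma ga_star_add: "ga_star G s (\<alpha> + \<beta>) = ga_star G s \<alpha> + ga_star G s \<beta>"
  unfolding ga_star_def by auto

definition dl :: "'g \<Rightarrow> 'g \<Rightarrow> 'a::field" where
  "dl a = (\<lambda>x. if x = a then 1 else 0)"

lemma dl_ga: "a \<in> carrier G \<Longrightarrow> (dl a :: 'g \<Rightarrow> 'a::field) \<in> group_algebra G"
proof -
  assume a: "a \<in> carrier G"
  have "{g\<in>carrier G. (dl a g::'a::field) \<noteq> 0} \<subseteq> {a}" by (auto simp: dl_def)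
  then show ?thesis using a by (auto simp: group_algebra_def dl_def intro: finite_subset)
qed

lemma dl_star:
  assumes "group_involution G s" "a \<in> carrier G"
  shows "ga_star G s (dl a) = dl (s a)"
proof
  fix x
  show "ga_star G s (dl a) x = dl (s a) x"
    using assms unfolding ga_star_def dl_def group_involution_def by metis
qed

lemma dl_mult:
  assumes "group G" "a \<in> carrier G" "c \<in> carrier G" "x \<in> carrier G"
  shows "ga_mult G (dl a) (dl c) x = (if x = a \<otimes>\<^bsub>G\<^esub> c then 1 else (0::'a::field))"
proof -
  have "ga_mult G (dl a) (dl c) x = (if x \<in> carrier G then (\<Sum>g\<in>{a}. dl a g * dl c (inv\<^bsub>G\<^esub> g \<otimes>\<^bsub>G\<^esub> x)) else 0)"
    by (rule ga_mult_S) (auto simp: dl_def assms)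
  also have "\<dots> = dl c (inv\<^bsub>G\<^esub> a \<otimes>\<^bsub>G\<^esub> x)" using assms by (simp add: dl_def)
  also have "\<dots> = (if x = a \<otimes>\<^bsub>G\<^esub> c then 1 else 0)"
  proof -
    have "(inv\<^bsub>G\<^esub> a \<otimes>\<^bsub>G\<^esub> x = c) = (x = a \<otimes>\<^bsub>G\<^esub> c)"
      using assms by (metis group.inv_solve_left monoid.m_closed group.is_monoid)
    then show ?thesis by (simp add: dl_def)
  qed
  finally show ?thesis .
qed

theorem lemma3:
  fixes G :: "('g, 'b) monoid_scheme" and s :: "'g \<Rightarrow> 'g"
  assumes "group G"
    and "infinite (UNIV :: 'a::field set)"
    and "CHAR('a) \<noteq> 2"
    and "group_involution G s"
    and "ga_normal G s TYPE('a)"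
  shows "\<forall>g\<in>carrier G. \<forall>h\<in>carrier G.
           g \<otimes>\<^bsub>G\<^esub> h = h \<otimes>\<^bsub>G\<^esub> g \<or> g \<otimes>\<^bsub>G\<^esub> h = s g \<otimes>\<^bsub>G\<^esub> s h"
proof (intro ballI)
  fix g h assume g: "g \<in> carrier G" and h: "h \<in> carrier G"
  have sc: "\<And>x. x \<in> carrier G \<Longrightarrow> s x \<in> carrier G" and ss: "\<And>x. x \<in> carrier G \<Longrightarrow> s (s x) = x"
    using assms(4) unfolding group_involution_def by auto
  define A :: "'g \<Rightarrow> 'a" where "A = dl g"
  define B :: "'g \<Rightarrow> 'a" where "B = dl (s h)"
  have Aga: "A \<in> group_algebra G" unfolding A_def by (rule dl_ga[OF g])
  have Bga: "B \<in> group_algebra G" unfolding B_def by (rule dl_ga[OF sc[OF h]])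
  have ABga: "A + B \<in> group_algebra G" using Aga Bga
  proof -
    have "{x\<in>carrier G. (A+B) x \<noteq> 0} \<subseteq> {x\<in>carrier G. A x \<noteq> 0} \<union> {x\<in>carrier G. B x \<noteq> 0}" by auto
    then show ?thesis using Aga Bga unfolding group_algebra_def by (auto intro: finite_subset)
  qed
  have As: "ga_star G s A = dl (s g)" unfolding A_def by (rule dl_star[OF assms(4) g])
  have Bs: "ga_star G s B = dl h" unfolding B_def using dl_star[OF assms(4) sc[OF h]] ss[OF h] by simp
  have nA: "ga_mult G A (ga_star G s A) = ga_mult G (ga_star G s A) A"
    using assms(5) Aga unfolding ga_normal_def by blast
  have nB: "ga_mult G B (ga_star G s B) = ga_mult G (ga_star G s B) B"
    using assms(5) Bga unfolding ga_normal_def by blast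
  have nAB: "ga_mult G (A+B) (ga_star G s (A+B)) = ga_mult G (ga_star G s (A+B)) (A+B)"
    using assms(5) ABga unfolding ga_normal_def by blast
  have Asga: "ga_star G s A \<in> group_algebra G" unfolding As by (rule dl_ga[OF sc[OF g]])
  have Bsga: "ga_star G s B \<in> group_algebra G" unfolding Bs by (rule dl_ga[OF h])
  have key: "ga_mult G A (ga_star G s B) + ga_mult G B (ga_star G s A)
      = ga_mult G (ga_star G s A) B + ga_mult G (ga_star G s B) A"
    using nAB nA nB
    by (simp add: ga_star_add ga_mult_add_left[OF Aga Bga] ga_mult_add_left[OF Asga Bsga]
        ga_mult_add_right algebra_simps)
  let ?x = "g \<otimes>\<^bsub>G\<^esub> h"
  have x: "?x \<in> carrier G" using g h assms(1) by (simp add: group.is_monoid monoid.m_closed)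
  have e0: "ga_mult G A (ga_star G s B) ?x + ga_mult G B (ga_star G s A) ?x
      = ga_mult G (ga_star G s A) B ?x + ga_mult G (ga_star G s B) A ?x"
    using fun_cong[OF key, of ?x] by simp
  have e1: "ga_mult G A (ga_star G s B) ?x = 1"
    unfolding Bs A_def using dl_mult[OF assms(1) g h x] by simp
  have e2: "ga_mult G B (ga_star G s A) ?x = (if ?x = s h \<otimes>\<^bsub>G\<^esub> s g then 1 else 0)"
    unfolding As B_def using dl_mult[OF assms(1) sc[OF h] sc[OF g] x] by simp
  have e3: "ga_mult G (ga_star G s A) B ?x = (if ?x = s g \<otimes>\<^bsub>G\<^esub> s h then 1 else 0)"
    unfolding As B_def using dl_mult[OF assms(1) sc[OF g] sc[OF h] x] by simp
  have e4: "ga_mult G (ga_star G s B) A ?x = (if ?x = h \<otimes>\<^bsub>G\<^esub> g then 1 else 0)"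
    unfolding Bs A_def using dl_mult[OF assms(1) h g x] by simp
  have eq: "1 + (if ?x = s h \<otimes>\<^bsub>G\<^esub> s g then 1 else 0) =
      (if ?x = s g \<otimes>\<^bsub>G\<^esub> s h then 1 else 0) + (if ?x = h \<otimes>\<^bsub>G\<^esub> g then (1::'a) else 0)"
    using e0 unfolding e1 e2 e3 e4 .
  have two: "(2::'a) \<noteq> 0"
  proof
    assume "(2::'a) = 0"
    then have "of_nat 2 = (0::'a)" by simp
    then have "CHAR('a) dvd 2" by (simp only: of_nat_eq_0_iff_char_dvd)
    moreover have "CHAR('a) \<noteq> 1" by simp
    ultimately show False using assms(3)
    proof -
      have "CHAR('a) \<le> 2" "CHAR('a) \<noteq> 0" using \<open>CHAR('a) dvd 2\<close> by (auto dest: dvd_imp_le intro!: Nat.gr0I)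
      then show False using assms(3) \<open>CHAR('a) \<noteq> 1\<close> by linarith
    qed
  qed
  show "g \<otimes>\<^bsub>G\<^esub> h = h \<otimes>\<^bsub>G\<^esub> g \<or> g \<otimes>\<^bsub>G\<^esub> h = s g \<otimes>\<^bsub>G\<^esub> s h"
  proof (rule ccontr)
    assume "\<not> ?thesis"
    then have "1 + (if ?x = s h \<otimes>\<^bsub>G\<^esub> s g then 1 else 0) = (0::'a)" using eq by auto
    then show False using two by (auto split: if_splits)
  qed
qed

end
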